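(* Let $M=(Q_M,\Sigma,\delta_M,s_M,F_M)$ be a complete DFA with $m\ge 2$ states and $N=(Q_N,\Sigma,\delta_N,s_N,F_N)$ a complete DFA with $n\ge 1$ states over the same alphabet, and suppose $k:=|F_M\setminus\{s_M\}|\ge 1$. Then there exists a complete DFA with at most $(2^{m-1}+2^{m-k-1})\cdot n-n+1$ states that accepts $L(M)^*\cap L(N)$.
   Context: A DFA is a 5-tuple $(Q,\Sigma,\delta,s,F)$ with total transition function $\delta:Q\times\Sigma\to Q$ (complete DFA); $L(M)$ is the accepted language; $L^*$ is the Kleene star of $L$. *)

theory Defs
  imports Main
begin

record ('q, 'a) dfa =
  states :: "'q set"
  alphabet :: "'a set"
  trans :: "'q \<Rightarrow> 'a \<Rightarrow> 'q"
  start :: "'q"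
  final :: "'q set"

definition complete_dfa :: "('q, 'a) dfa \<Rightarrow> bool" where
  "complete_dfa M \<longleftrightarrow>
     finite (states M) \<and> finite (alphabet M) \<and>
     start M \<in> states M \<and> final M \<subseteq> states M \<and>
     (\<forall>q\<in>states M. \<forall>a\<in>alphabet M. trans M q a \<in> states M)"

definition trans_star :: "('q, 'a) dfa \<Rightarrow> 'q \<Rightarrow> 'a list \<Rightarrow> 'q" where
  "trans_star M q w = foldl (trans M) q w"

definition lang :: "('q, 'a) dfa \<Rightarrow> 'a list set" where
  "lang M = {w. w \<in> lists (alphabet M) \<and> trans_star M (start M) w \<in> final M}"

inductive_set kstar :: "'a list set \<Rightarrow> 'a list set" for L where
  kstar_Nil: "[] \<in> kstar L"
| kstar_app: "u \<in> L \<Longrightarrow> v \<in> kstar L \<Longrightarrow> u @ v \<in> kstar L"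

end

theory Submission
  imports Defs
begin

lemma ts_Nil[simp]: "trans_star M q [] = q" by (simp add: trans_star_def)
lemma ts_Cons[simp]: "trans_star M q (a#w) = trans_star M (trans M q a) w" by (simp add: trans_star_def)
lemma ts_app: "trans_star M q (w@v) = trans_star M (trans_star M q w) v" by (simp add: trans_star_def)
lemma ts_snoc: "trans_star M q (w@[a]) = trans M (trans_star M q w) a" by (simp add: trans_star_def)

lemma ts_states: "complete_dfa M \<Longrightarrow> q \<in> states M \<Longrightarrow> w \<in> lists (alphabet M) \<Longrightarrow> trans_star M q w \<in> states M"
  by (induction w arbitrary: q) (auto simp: complete_dfa_def)

lemma encode:
  fixes P :: "('s,'a) dfa"
  assumes "finite R" "start P \<in> R" "\<forall>r\<in>R. \<forall>a\<in>alphabet P. trans P r a \<in> R" "finite (alphabet P)"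
  shows "\<exists>D::(nat,'a) dfa. complete_dfa D \<and> alphabet D = alphabet P \<and> card (states D) = card R \<and> lang D = lang P"
proof -
  obtain f where f: "bij_betw f {0..<card R} R" using ex_bij_betw_nat_finite[OF assms(1)] by blast
  define g where "g = the_inv_into {0..<card R} f"
  have g1: "r \<in> R \<Longrightarrow> g r \<in> {0..<card R}" for r
    using f unfolding g_def by (meson bij_betw_the_inv_into bij_betwE)
  have g2: "r \<in> R \<Longrightarrow> f (g r) = r" for r
    using f unfolding g_def by (meson bij_betw_def f_the_inv_into_f_bij_betw f)
  have f1: "i \<in> {0..<card R} \<Longrightarrow> f i \<in> R" for i using f by (meson bij_betwE)
  define D :: "(nat,'a) dfa" where "D = \<lparr>states = {0..<card R}, alphabet = alphabet P,
     trans = (\<lambda>i a. g (trans P (f i) a)), start = g (start P),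
     final = {i \<in> {0..<card R}. f i \<in> final P}\<rparr>"
  have key: "r \<in> R \<Longrightarrow> w \<in> lists (alphabet P) \<Longrightarrow> trans_star D (g r) w \<in> {0..<card R} \<and> f (trans_star D (g r) w) = trans_star P r w" for r w
  proof (induction w arbitrary: r)
    case Nil then show ?case using g1 g2 by simp
  next
    case (Cons a w)
    have "trans P r a \<in> R" using Cons assms(3) by auto
    then show ?case using Cons.IH[of "trans P r a"] Cons.prems g2 by (simp add: D_def)
  qed
  have cD: "complete_dfa D" unfolding complete_dfa_def D_def using assms g1 f1 by auto
  have sD: "start D = g (start P)" and fD: "final D = {i \<in> {0..<card R}. f i \<in> final P}"
    and aD: "alphabet D = alphabet P" by (simp_all add: D_def)
  have "w \<in> lists (alphabet P) \<Longrightarrow> (trans_star D (start D) w \<in> final D) = (trans_star P (start P) w \<in> final P)" for w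
    using key[OF assms(2), of w] unfolding sD fD by auto
  moreover have "lang D = lang P"
    unfolding lang_def aD using calculation by auto
  ultimately show ?thesis using cD by (intro exI[of _ D]) (auto simp: D_def)
qed

lemma kstar_lists: "w \<in> kstar L \<Longrightarrow> L \<subseteq> lists S \<Longrightarrow> w \<in> lists S"
  by (induction rule: kstar.induct) auto

lemma kstar_snoc: "u \<in> kstar L \<Longrightarrow> v \<in> L \<Longrightarrow> u @ v \<in> kstar L"
proof (induction rule: kstar.induct)
  case kstar_Nil
  have "v @ [] \<in> kstar L" using kstar_Nil by (intro kstar.kstar_app kstar.kstar_Nil)
  then show ?case by simp
next
  case (kstar_app u w) then show ?case using kstar.kstar_app[of u L "w@v"] by simp
qed

lemma kstar_last: "w \<in> kstar L \<Longrightarrow> w \<noteq> [] \<Longrightarrow> \<exists>u v. w = u @ v \<and> u \<in> kstar L \<and> v \<in> L \<and> v \<noteq> []"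
proof (induction rule: kstar.induct)
  case kstar_Nil then show ?case by simp
next
  case (kstar_app u1 v1)
  show ?case
  proof (cases "v1 = []")
    case True then show ?thesis using kstar_app kstar.kstar_Nil by (intro exI[of _ "[]"] exI[of _ u1]) auto
  next
    case False
    then obtain u' v' where "v1 = u' @ v'" "u' \<in> kstar L" "v' \<in> L" "v' \<noteq> []" using kstar_app by blast
    then show ?thesis using kstar_app kstar.kstar_app[of u1 L u'] by (intro exI[of _ "u1@u'"] exI[of _ v']) auto
  qed
qed

definition stepM :: "('q,'a) dfa \<Rightarrow> 'q set \<Rightarrow> 'a \<Rightarrow> 'q set" where
  "stepM M S a = (let T = (\<lambda>q. trans M q a) ` S in if T \<inter> final M \<noteq> {} then insert (start M) T else T)"

definition setof :: "('q,'a) dfa \<Rightarrow> 'q set option \<Rightarrow> 'q set" where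
  "setof M X = (case X of None \<Rightarrow> {start M} | Some S \<Rightarrow> S)"

definition prodA :: "('q,'a) dfa \<Rightarrow> ('p,'a) dfa \<Rightarrow> ('q set option \<times> 'p, 'a) dfa" where
  "prodA M N = \<lparr>states = UNIV, alphabet = alphabet M,
     trans = (\<lambda>(X,p) a. (Some (stepM M (setof M X) a), trans N p a)),
     start = (None, start N),
     final = {(X,p). p \<in> final N \<and> (case X of None \<Rightarrow> True | Some S \<Rightarrow> S \<inter> final M \<noteq> {})}\<rparr>"

definition Sw :: "('q,'a) dfa \<Rightarrow> 'a list \<Rightarrow> 'q set" where
  "Sw M w = {trans_star M (start M) v | u v. w = u @ v \<and> u \<in> kstar (lang M)}"

lemma lang_lists: "lang M \<subseteq> lists (alphabet M)" by (auto simp: lang_def)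

lemma Sw_final: "w \<in> lists (alphabet M) \<Longrightarrow> (Sw M w \<inter> final M \<noteq> {}) = (\<exists>u v. w = u @ v \<and> u \<in> kstar (lang M) \<and> v \<in> lang M)"
proof
  assume w: "w \<in> lists (alphabet M)" and "Sw M w \<inter> final M \<noteq> {}"
  then obtain x where "x \<in> Sw M w" "x \<in> final M" by blast
  then obtain u v where h: "x = trans_star M (start M) v" "w = u @ v" "u \<in> kstar (lang M)"
    unfolding Sw_def by blast
  have "v \<in> lang M" using w h \<open>x \<in> final M\<close> by (auto simp: lang_def)
  then show "\<exists>u v. w = u @ v \<and> u \<in> kstar (lang M) \<and> v \<in> lang M" using h by blast
next
  assume "\<exists>u v. w = u @ v \<and> u \<in> kstar (lang M) \<and> v \<in> lang M"
  then obtain u v where h: "w = u @ v" "u \<in> kstar (lang M)" "v \<in> lang M" by blast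
  then have "trans_star M (start M) v \<in> Sw M w" "trans_star M (start M) v \<in> final M"
    unfolding Sw_def lang_def by blast+
  then show "Sw M w \<inter> final M \<noteq> {}" by blast
qed

lemma Sw_final2: "w \<in> lists (alphabet M) \<Longrightarrow> w \<noteq> [] \<Longrightarrow> (Sw M w \<inter> final M \<noteq> {}) = (w \<in> kstar (lang M))"
proof -
  assume a: "w \<in> lists (alphabet M)" "w \<noteq> []"
  show ?thesis unfolding Sw_final[OF a(1)]
  proof
    assume "\<exists>u v. w = u @ v \<and> u \<in> kstar (lang M) \<and> v \<in> lang M"
    then show "w \<in> kstar (lang M)" using kstar_snoc by blast
  next
    assume "w \<in> kstar (lang M)"
    then show "\<exists>u v. w = u @ v \<and> u \<in> kstar (lang M) \<and> v \<in> lang M"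
      using kstar_last[of w "lang M"] a(2) by blast
  qed
qed

lemma Sw_Nil: "Sw M [] = {start M}"
  by (auto simp: Sw_def intro: kstar.kstar_Nil)

lemma Sw_step:
  assumes "w @ [a] \<in> lists (alphabet M)"
  shows "stepM M (Sw M w) a = Sw M (w @ [a])"
proof -
  let ?K = "kstar (lang M)"
  define T where "T = (\<lambda>q. trans M q a) ` Sw M w"
  have T: "T = {trans_star M (start M) v' | u v'. w @ [a] = u @ v' \<and> u \<in> ?K \<and> v' \<noteq> []}" (is "T = ?R")
  proof
    show "T \<subseteq> ?R"
    proof
      fix x assume "x \<in> T"
      then obtain u v where h: "x = trans M (trans_star M (start M) v) a" "w = u @ v" "u \<in> ?K"
        unfolding T_def Sw_def by blast
      then have "x = trans_star M (start M) (v @ [a])" "w @ [a] = u @ (v @ [a])" by (simp_all add: ts_snoc)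
      then show "x \<in> ?R" using h(3) by blast
    qed
  next
    show "?R \<subseteq> T"
    proof
      fix x assume "x \<in> {trans_star M (start M) v' | u v'. w @ [a] = u @ v' \<and> u \<in> ?K \<and> v' \<noteq> []}"
      then obtain u v' where h: "x = trans_star M (start M) v'" "w @ [a] = u @ v'" "u \<in> ?K" "v' \<noteq> []" by blast
      obtain v b where vb: "v' = v @ [b]" using rev_exhaust[of v'] h(4) by blast
      with h(2) have "w = u @ v" "b = a" by simp_all
      with vb have "v' = v @ [a]" by simp
      have m: "trans_star M (start M) v \<in> Sw M w" unfolding Sw_def using \<open>w = u @ v\<close> h(3) by blast
      have "x = trans M (trans_star M (start M) v) a" using h(1) \<open>v' = v @ [a]\<close> by (simp add: ts_snoc)
      then show "x \<in> T" unfolding T_def using m by blast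
    qed
  qed
  have TF: "(T \<inter> final M \<noteq> {}) = (w @ [a] \<in> ?K)"
  proof
    assume "T \<inter> final M \<noteq> {}"
    then obtain u v' where h: "w @ [a] = u @ v'" "u \<in> ?K" "trans_star M (start M) v' \<in> final M"
      unfolding T by blast
    have "v' \<in> lists (alphabet M)" 
    proof -
      have "u @ v' \<in> lists (alphabet M)" using assms h(1) by simp
      then show ?thesis by simp
    qed
    then have "v' \<in> lang M" using h by (simp add: lang_def)
    then show "w @ [a] \<in> ?K" using h(1,2) kstar_snoc by simp
  next
    assume "w @ [a] \<in> ?K"
    then obtain u v where "w @ [a] = u @ v" "u \<in> ?K" "v \<in> lang M" "v \<noteq> []" using kstar_last by blast
    then have "trans_star M (start M) v \<in> T" "trans_star M (start M) v \<in> final M"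
      unfolding T lang_def by blast+
    then show "T \<inter> final M \<noteq> {}" by blast
  qed
  have S2: "Sw M (w @ [a]) = T \<union> (if w @ [a] \<in> ?K then {start M} else {})"
  proof
    show "Sw M (w @ [a]) \<subseteq> T \<union> (if w @ [a] \<in> ?K then {start M} else {})"
    proof
      fix x assume "x \<in> Sw M (w @ [a])"
      then obtain u v' where h: "x = trans_star M (start M) v'" "w @ [a] = u @ v'" "u \<in> ?K"
        unfolding Sw_def by blast
      show "x \<in> T \<union> (if w @ [a] \<in> ?K then {start M} else {})"
      proof (cases "v' = []")
        case True then show ?thesis using h by simp
      next
        case False then have "x \<in> T" unfolding T using h by blast
        then show ?thesis by blast
      qed
    qed
  next
    show "T \<union> (if w @ [a] \<in> ?K then {start M} else {}) \<subseteq> Sw M (w @ [a])"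
    proof
      fix x assume x: "x \<in> T \<union> (if w @ [a] \<in> ?K then {start M} else {})"
      show "x \<in> Sw M (w @ [a])"
      proof (cases "x \<in> T")
        case True then show ?thesis unfolding T Sw_def by blast
      next
        case False
        then have "x = start M" "w @ [a] \<in> ?K" using x by (auto split: if_splits)
        then have "x = trans_star M (start M) [] \<and> w @ [a] = (w @ [a]) @ [] \<and> w @ [a] \<in> ?K" by simp
        then show ?thesis unfolding Sw_def by blast
      qed
    qed
  qed
  show ?thesis
  proof (cases "w @ [a] \<in> ?K")
    case True then show ?thesis unfolding stepM_def Let_def T_def[symmetric] S2 using TF by simp
  next
    case False then show ?thesis unfolding stepM_def Let_def T_def[symmetric] S2 using TF by simp
  qed
qed

lemma prod_run:
  "w \<in> lists (alphabet M) \<Longrightarrow> trans_star (prodA M N) (start (prodA M N)) w =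
     (if w = [] then None else Some (Sw M w), trans_star N (start N) w)"
proof (induction w rule: rev_induct)
  case Nil then show ?case by (simp add: prodA_def)
next
  case (snoc a w)
  have "setof M (if w = [] then None else Some (Sw M w)) = Sw M w"
    by (simp add: setof_def Sw_Nil)
  then show ?case using snoc Sw_step[OF snoc.prems] by (simp add: ts_snoc prodA_def)
qed

lemma prod_lang:
  assumes "alphabet N = alphabet M"
  shows "lang (prodA M N) = kstar (lang M) \<inter> lang N"
proof -
  have "w \<in> lang (prodA M N) \<longleftrightarrow> w \<in> kstar (lang M) \<inter> lang N" for w
  proof (cases "w \<in> lists (alphabet M)")
    case True
    then show ?thesis using prod_run[OF True, of N] Sw_final2[OF True] assms
      by (cases "w = []") (auto simp: lang_def prodA_def intro: kstar.kstar_Nil)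
  next
    case False then show ?thesis using assms by (auto simp: lang_def prodA_def)
  qed
  then show ?thesis by blast
qed

lemma Sw_props:
  assumes "complete_dfa M" "w \<in> lists (alphabet M)"
  shows "Sw M w \<subseteq> states M" "Sw M w \<noteq> {}" "Sw M w \<inter> final M \<noteq> {} \<longrightarrow> start M \<in> Sw M w"
proof -
  show "Sw M w \<subseteq> states M"
  proof
    fix x assume "x \<in> Sw M w"
    then obtain u v where "x = trans_star M (start M) v" "w = u @ v" by (auto simp: Sw_def)
    then show "x \<in> states M" using assms ts_states[of M "start M" v] by (auto simp: complete_dfa_def)
  qed
  show "Sw M w \<noteq> {}" unfolding Sw_def using kstar.kstar_Nil by fastforce
  show "Sw M w \<inter> final M \<noteq> {} \<longrightarrow> start M \<in> Sw M w"
  proof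
    assume "Sw M w \<inter> final M \<noteq> {}"
    then obtain u v where "w = u @ v" "u \<in> kstar (lang M)" "v \<in> lang M" using Sw_final[OF assms(2)] by blast
    then have "w \<in> kstar (lang M)" using kstar_snoc by blast
    then have "start M = trans_star M (start M) [] \<and> w = w @ [] \<and> w \<in> kstar (lang M)" by simp
    then show "start M \<in> Sw M w" unfolding Sw_def by blast
  qed
qed

theorem theorem4:
  fixes M :: "('q, 'a) dfa" and N :: "('p, 'a) dfa"
  assumes "complete_dfa M" and "complete_dfa N"
    and "alphabet N = alphabet M"
    and "card (states M) \<ge> 2" and "card (states N) \<ge> 1"
    and "card (final M - {start M}) \<ge> 1"
  shows "\<exists>D :: (nat, 'a) dfa. complete_dfa D \<and> alphabet D = alphabet M \<and>
           card (states D) \<le>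
             (2 ^ (card (states M) - 1) + 2 ^ (card (states M) - card (final M - {start M}) - 1))
               * card (states N) - card (states N) + 1 \<and>
           lang D = kstar (lang M) \<inter> lang N"
proof -
  let ?P = "prodA M N"
  let ?Q = "states M" and ?s = "start M" and ?F = "final M"
  define m where "m = card ?Q"
  define n where "n = card (states N)"
  define k where "k = card (?F - {?s})"
  define A where "A = {S. S \<subseteq> ?Q \<and> S \<noteq> {} \<and> (S \<inter> ?F \<noteq> {} \<longrightarrow> ?s \<in> S)}"
  define C where "C = insert (None, start N) (Some ` A \<times> states N)"
  define R where "R = (\<lambda>w. trans_star ?P (start ?P) w) ` lists (alphabet M)"
  have fQ: "finite ?Q" and fN: "finite (states N)" and sQ: "?s \<in> ?Q" and FQ: "?F \<subseteq> ?Q"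
    using assms(1,2) by (auto simp: complete_dfa_def)
  have RC: "R \<subseteq> C"
  proof
    fix x assume "x \<in> R"
    then obtain w where w: "w \<in> lists (alphabet M)" "x = trans_star ?P (start ?P) w" by (auto simp: R_def)
    have "trans_star N (start N) w \<in> states N" using ts_states[OF assms(2), of "start N" w] assms(2,3) w
      by (auto simp: complete_dfa_def)
    then show "x \<in> C" using w prod_run[OF w(1), of N] Sw_props[OF assms(1) w(1)]
      by (auto simp: C_def A_def)
  qed
  have fA: "finite A" unfolding A_def using fQ by (auto intro: finite_subset[of _ "Pow ?Q"])
  have fC: "finite C" unfolding C_def using fA fN by auto
  have sub: "A \<subseteq> (insert ?s ` Pow (?Q - {?s})) \<union> (Pow ((?Q - {?s}) - (?F - {?s})) - {{}})"
  proof
    fix S assume S: "S \<in> A"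
    show "S \<in> (insert ?s ` Pow (?Q - {?s})) \<union> (Pow ((?Q - {?s}) - (?F - {?s})) - {{}})"
    proof (cases "?s \<in> S")
      case True
      then have e: "S = insert ?s (S - {?s})" by auto
      have "S - {?s} \<in> Pow (?Q - {?s})" using S by (auto simp: A_def)
      then have "S \<in> insert ?s ` Pow (?Q - {?s})" using e by (rule rev_image_eqI)
      then show ?thesis by (rule UnI1)
    next
      case False
      have h: "S \<subseteq> ?Q" "S \<noteq> {}" "S \<inter> ?F = {}" using S False by (auto simp: A_def)
      have "S \<subseteq> (?Q - {?s}) - (?F - {?s})" using h(1,3) False by blast
      then have "S \<in> Pow ((?Q - {?s}) - (?F - {?s})) - {{}}" using h(2) by blast
      then show ?thesis by (rule UnI2)
    qed
  qed
  have c1: "card (insert ?s ` Pow (?Q - {?s})) \<le> 2 ^ (m - 1)"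
    using card_image_le[of "Pow (?Q - {?s})" "insert ?s"] fQ sQ by (simp add: card_Pow m_def)
  have cX: "card ((?Q - {?s}) - (?F - {?s})) = m - 1 - k"
    using card_Diff_subset[of "?F - {?s}" "?Q - {?s}"] fQ FQ sQ
    by (auto simp: m_def k_def finite_subset)
  have c2: "card (Pow ((?Q - {?s}) - (?F - {?s})) - {{}}) = 2 ^ (m - 1 - k) - 1"
    using fQ cX by (simp add: card_Pow)
  have cA: "card A \<le> 2 ^ (m - 1) + 2 ^ (m - 1 - k) - 1"
  proof -
    have "card A \<le> card ((insert ?s ` Pow (?Q - {?s})) \<union> (Pow ((?Q - {?s}) - (?F - {?s})) - {{}}))"
      using sub fQ by (intro card_mono) auto
    also have "\<dots> \<le> 2 ^ (m - 1) + (2 ^ (m - 1 - k) - 1)" 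
    proof -
      have "card ((insert ?s ` Pow (?Q - {?s})) \<union> (Pow ((?Q - {?s}) - (?F - {?s})) - {{}}))
        \<le> card (insert ?s ` Pow (?Q - {?s})) + card (Pow ((?Q - {?s}) - (?F - {?s})) - {{}})"
        by (rule card_Un_le)
      then show ?thesis using c1 c2 by linarith
    qed
    finally show ?thesis by simp
  qed
  have cC: "card C \<le> card A * n + 1"
  proof -
    have "card C \<le> Suc (card (Some ` A \<times> states N))" unfolding C_def using fA fN by (simp add: card_insert_if)
    also have "card (Some ` A \<times> states N) = card A * n"
      by (simp add: card_cartesian_product card_image n_def)
    finally show ?thesis by simp
  qed
  have arith: "card A * n + 1 \<le> (2 ^ (m - 1) + 2 ^ (m - k - 1)) * n - n + 1"
  proof -
    have e: "m - k - 1 = m - 1 - k" by simp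
    have "card A * n \<le> (2 ^ (m - 1) + 2 ^ (m - 1 - k) - 1) * n" using cA by simp
    also have "\<dots> = (2 ^ (m - 1) + 2 ^ (m - 1 - k)) * n - n" by (simp add: diff_mult_distrib)
    finally show ?thesis unfolding e by simp
  qed
  have cR: "card R \<le> card C" using card_mono[OF fC RC] .
  have fR: "finite R" using finite_subset[OF RC fC] .
  have startR: "start ?P \<in> R" unfolding R_def by (rule image_eqI[of _ _ "[]"]) auto
  have closed: "\<forall>r\<in>R. \<forall>a\<in>alphabet ?P. trans ?P r a \<in> R"
  proof (intro ballI)
    fix r a assume "r \<in> R" "a \<in> alphabet ?P"
    then obtain w where "w \<in> lists (alphabet M)" "r = trans_star ?P (start ?P) w" "a \<in> alphabet M"
      by (auto simp: R_def prodA_def)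
    then show "trans ?P r a \<in> R" unfolding R_def by (intro image_eqI[of _ _ "w @ [a]"]) (auto simp: ts_snoc)
  qed
  have fS: "finite (alphabet ?P)" using assms(1) by (simp add: prodA_def complete_dfa_def)
  obtain D :: "(nat,'a) dfa" where D: "complete_dfa D" "alphabet D = alphabet ?P" "card (states D) = card R"
    "lang D = lang ?P" using encode[OF fR startR closed fS] by blast
  have b: "card (states D) \<le> (2 ^ (m - 1) + 2 ^ (m - k - 1)) * n - n + 1"
    using D(3) cR cC arith by linarith
  have al: "alphabet D = alphabet M" using D(2) by (simp add: prodA_def)
  have la: "lang D = kstar (lang M) \<inter> lang N" using D(4) prod_lang[OF assms(3)] by simp
  show ?thesis
    apply (rule exI[of _ D])
    using D(1) al la b unfolding m_def n_def k_def by blast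
qed

end
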